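(* Let $d\ge 1$ and $q\ge 1$, let $\mathbf c_1,\dots,\mathbf c_q\in\mathbb R^d$ be discrete lattice velocities with weights $w_1,\dots,w_q>0$ and lattice speed of sound $c_s>0$, and let $\mathbf h:\mathbb R^d\to\mathbb R^q$ be given componentwise by $$h_i(\mathbf u)=\sqrt{w_i}\Big(1+\frac{\mathbf c_i\cdot\mathbf u}{2c_s^2}+\frac{(\mathbf c_i\cdot\mathbf u)^2}{8c_s^4}-\frac{\|\mathbf u\|^2}{4c_s^2}\Big).$$ For $\hat{\mathbf u}\in\mathbb R^d$ let $\bar J(\hat{\mathbf u})=[\mathbf h(\hat{\mathbf u}),\partial_1\mathbf h(\hat{\mathbf u}),\dots,\partial_d\mathbf h(\hat{\mathbf u})]\in\mathbb R^{q\times(d+1)}$, and, whenever $\bar J(\hat{\mathbf u})$ has full column rank, define the denoising operator $\mathcal D(\hat{\mathbf u})=\bar J(\hat{\mathbf u})\big(\bar J(\hat{\mathbf u})^\top\bar J(\hat{\mathbf u})\big)^{-1}\bar J(\hat{\mathbf u})^\top$ (the orthogonal projector onto the column space of $\bar J(\hat{\mathbf u})$). Let $g$ be a lattice symmetry, i.e. an orthogonal map $R_g\in O(d)$ together with a permutation $\sigma_g$ of $\{1,\dots,q\}$ such that $\mathbf c_{\sigma_g(i)}=R_g\mathbf c_i$ and $w_{\sigma_g(i)}=w_i$ for all $i$, and let $P_g\in\mathbb R^{q\times q}$ be the permutation matrix with $(P_g\mathbf f)_i=f_{\sigma_g^{-1}(i)}$ for $\mathbf f\in\mathbb R^q$.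 Then for every $\hat{\mathbf u}\in\mathbb R^d$ with $\bar J(\hat{\mathbf u})$ of full column rank, $\bar J(R_g\hat{\mathbf u})$ also has full column rank and $$\mathcal D(R_g\hat{\mathbf u})\,P_g=P_g\,\mathcal D(\hat{\mathbf u}).$$
   Context: This is the setting of a D$d$Q$q$ lattice Boltzmann model. The lattice is assumed to satisfy the standard isotropy conditions: $\sum_i w_i=1$, $\sum_i w_i c_{ik}c_{il}=c_s^2\delta_{kl}$, $\sum_i w_i c_{ik}c_{il}c_{ip}c_{iq}=c_s^4(\delta_{kl}\delta_{pq}+\delta_{kp}\delta_{lq}+\delta_{kq}\delta_{lp})$, and all weighted velocity moments of orders 1, 3 and 5 vanish. The function $\mathbf h$ is the (second-order) square-root equilibrium amplitude per unit density, $\partial_k$ denotes the partial derivative with respect to the $k$-th velocity component. *)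

theory Defs
  imports "HOL-Analysis.Analysis"
begin

definition hfun :: "('q \<Rightarrow> real^'d) \<Rightarrow> ('q \<Rightarrow> real) \<Rightarrow> real \<Rightarrow> real^'d \<Rightarrow> real^'q" where
  "hfun c w cs u = (\<chi> i. sqrt (w i) * (1 + (c i \<bullet> u) / (2 * cs^2)
       + (c i \<bullet> u)^2 / (8 * cs^4) - (norm u)^2 / (4 * cs^2)))"

definition partial :: "'d \<Rightarrow> (real^'d \<Rightarrow> real^'q) \<Rightarrow> real^'d \<Rightarrow> real^'q" where
  "partial k f u = vector_derivative (\<lambda>t. f (u + t *\<^sub>R axis k 1)) (at 0)"

text \<open>The q x (d+1) matrix [h, d_1 h, ..., d_d h]; column None is h,
  column Some k is the k-th partial derivative.\<close>
definition Jbar :: "('q::finite \<Rightarrow> real^'d::finite) \<Rightarrow> ('q \<Rightarrow> real) \<Rightarrow> real \<Rightarrow> real^'d \<Rightarrow> real^('d option)^'q" where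
  "Jbar c w cs u = (\<chi> i j. (case j of None \<Rightarrow> hfun c w cs u
                                   | Some k \<Rightarrow> partial k (hfun c w cs) u) $ i)"

definition full_col_rank :: "real^'n::finite^'m::finite \<Rightarrow> bool" where
  "full_col_rank A \<longleftrightarrow> rank A = CARD('n)"

definition denoise :: "('q::finite \<Rightarrow> real^'d::finite) \<Rightarrow> ('q \<Rightarrow> real) \<Rightarrow> real \<Rightarrow> real^'d \<Rightarrow> real^'q^'q" where
  "denoise c w cs u = (let J = Jbar c w cs u in
     J ** matrix_inv (transpose J ** J) ** transpose J)"

definition perm_matrix :: "('q::finite \<Rightarrow> 'q) \<Rightarrow> real^'q^'q" where
  "perm_matrix \<sigma> = (\<chi> i j. if j = inv \<sigma> i then 1 else 0)"

definition isotropic_lattice :: "('q::finite \<Rightarrow> real^'d::finite) \<Rightarrow> ('q \<Rightarrow> real) \<Rightarrow> real \<Rightarrow> bool" where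
  "isotropic_lattice c w cs \<longleftrightarrow>
     (\<Sum>i\<in>UNIV. w i) = 1
   \<and> (\<forall>k l. (\<Sum>i\<in>UNIV. w i * c i $ k * c i $ l) = cs^2 * (if k = l then 1 else 0))
   \<and> (\<forall>k l p r. (\<Sum>i\<in>UNIV. w i * c i $ k * c i $ l * c i $ p * c i $ r) =
        cs^4 * ((if k = l \<and> p = r then 1 else 0) + (if k = p \<and> l = r then 1 else 0)
                + (if k = r \<and> l = p then 1 else 0)))
   \<and> (\<forall>k. (\<Sum>i\<in>UNIV. w i * c i $ k) = 0)
   \<and> (\<forall>k l p. (\<Sum>i\<in>UNIV. w i * c i $ k * c i $ l * c i $ p) = 0)
   \<and> (\<forall>k l p r s. (\<Sum>i\<in>UNIV. w i * c i $ k * c i $ l * c i $ p * c i $ r * c i $ s) = 0)"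

end

theory Submission
  imports Defs
begin

definition dh :: "('q \<Rightarrow> real^'d) \<Rightarrow> ('q \<Rightarrow> real) \<Rightarrow> real \<Rightarrow> 'd \<Rightarrow> real^'d \<Rightarrow> real^'q" where
  "dh c w cs k u = (\<chi> i. sqrt (w i) * (c i $ k / (2*cs^2) + (c i \<bullet> u) * c i $ k / (4*cs^4) - u $ k / (2*cs^2)))"

lemma sum_option: "(\<Sum>a\<in>UNIV. f a) = f None + (\<Sum>l\<in>UNIV. f (Some l))"
  for f :: "'a::finite option \<Rightarrow> 'b::comm_monoid_add"
  by (simp add: UNIV_option_conv sum.reindex)

lemma aux: fixes s a b N x t cs :: real
  shows "s*(1 + (a+t*b)/(2*cs^2) + (a+t*b)^2/(8*cs^4) - (N + 2*t*x + t^2)/(4*cs^2))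
   = s*(1 + a/(2*cs^2) + a^2/(8*cs^4) - N/(4*cs^2)) + t*(s*(b/(2*cs^2) + a*b/(4*cs^4) - x/(2*cs^2)))
     + t^2*(s*(b^2/(8*cs^4) - 1/(4*cs^2)))"
  by (cases "cs = 0") (simp_all add: field_simps power2_eq_square)

lemma hfun_line:
  fixes c :: "'q::finite \<Rightarrow> real^'d::finite"
  shows "hfun c w cs (u + t *\<^sub>R axis k 1) = hfun c w cs u + t *\<^sub>R dh c w cs k u
     + (t^2) *\<^sub>R (\<chi> i. sqrt (w i) * ((c i $ k)^2/(8*cs^4) - 1/(4*cs^2)))"
proof -
  have n: "(norm (u + t *\<^sub>R axis k 1))^2 = (norm u)^2 + 2*t*u$k + t^2"
    unfolding power2_norm_eq_inner
    by (simp add: inner_add_left inner_add_right inner_axis inner_axis' algebra_simps power2_eq_square)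
  show ?thesis
    unfolding vec_eq_iff hfun_def dh_def
    apply (simp add: n inner_add_right inner_axis)
    apply (intro allI)
    apply (rule aux)
    done
qed

lemma partial_hfun:
  fixes c :: "'q::finite \<Rightarrow> real^'d::finite"
  shows "partial k (hfun c w cs) u = dh c w cs k u"
proof -
  let ?C = "(\<chi> i. sqrt (w i) * ((c i $ k)^2/(8*cs^4) - 1/(4*cs^2))) :: real^'q"
  have "((\<lambda>t. hfun c w cs u + t *\<^sub>R dh c w cs k u + (t^2) *\<^sub>R ?C) has_vector_derivative
      (0 + 1 *\<^sub>R dh c w cs k u + (2 * 0 ^ 1 * 1) *\<^sub>R ?C)) (at 0)"
  proof (intro derivative_intros)
    show "((\<lambda>t. t *\<^sub>R dh c w cs k u) has_vector_derivative 1 *\<^sub>R dh c w cs k u) (at 0)"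
      using has_vector_derivative_scaleR[OF DERIV_ident has_vector_derivative_const[of "dh c w cs k u"]] by simp
    show "((\<lambda>t. t^2 *\<^sub>R ?C) has_vector_derivative (2 * 0 ^ 1 * 1) *\<^sub>R ?C) (at 0)"
      using has_vector_derivative_scaleR[OF DERIV_pow[of 2] has_vector_derivative_const[of "?C"], of 0 UNIV] by simp
  qed
  then have "((\<lambda>t. hfun c w cs (u + t *\<^sub>R axis k 1)) has_vector_derivative dh c w cs k u) (at 0)"
    by (simp add: hfun_line)
  then show ?thesis unfolding partial_def by (rule vector_derivative_at)
qed

lemma inner_mv_transpose: "inner (A *v x) y = inner x (transpose A *v (y::real^'m))"
  for A :: "real^'n^'m"
  by (metis dot_lmul_matrix transpose_matrix_vector transpose_transpose)

lemma orth_inner: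
  assumes "orthogonal_matrix R"
  shows "inner (R *v x) (R *v y) = inner x (y::real^'n)"
proof -
  have "transpose R ** R = mat 1" using assms by (simp add: orthogonal_matrix_def)
  then show ?thesis by (simp add: inner_mv_transpose matrix_vector_mul_assoc)
qed

lemma orth_norm:
  assumes "orthogonal_matrix R"
  shows "norm (R *v x) = norm (x::real^'n)"
  by (simp add: norm_eq_sqrt_inner orth_inner[OF assms])

lemma Jbar_None: "Jbar c w cs u $ i $ None = hfun c w cs u $ i"
  by (simp add: Jbar_def)

lemma Jbar_Some: "Jbar c w cs u $ i $ Some k = dh c w cs k u $ i"
  by (simp add: Jbar_def partial_hfun)

lemma perm_mult:
  fixes X :: "real^'n^'q::finite"
  shows "perm_matrix \<sigma> ** X = (\<chi> i b. X $ (inv \<sigma> i) $ b)"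
proof -
  have e: "\<And>P (x::real). (if P then 1 else 0) * x = (if P then x else 0)" by simp
  show ?thesis by (simp add: perm_matrix_def matrix_matrix_mult_def vec_eq_iff e)
qed

lemma perm_orth:
  assumes "\<sigma> permutes (UNIV::'q::finite set)"
  shows "transpose (perm_matrix \<sigma>) ** perm_matrix \<sigma> = mat 1"
    "perm_matrix \<sigma> ** transpose (perm_matrix \<sigma>) = mat 1"
proof -
  have "perm_matrix \<sigma> ** transpose (perm_matrix \<sigma>) = (mat 1 :: real^'q^'q)"
    unfolding perm_mult
    using permutes_inj[OF permutes_inv[OF assms]]
    by (auto simp add: vec_eq_iff transpose_def perm_matrix_def mat_def inj_eq)
  then show "perm_matrix \<sigma> ** transpose (perm_matrix \<sigma>) = (mat 1 :: real^'q^'q)"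
    "transpose (perm_matrix \<sigma>) ** perm_matrix \<sigma> = (mat 1 :: real^'q^'q)"
    using matrix_left_right_inverse by auto
qed

definition Mrot :: "real^'d^'d \<Rightarrow> real^('d option)^('d option)" where
  "Mrot R = (\<chi> a b. case a of None \<Rightarrow> (case b of None \<Rightarrow> 1 | Some _ \<Rightarrow> 0)
                         | Some l \<Rightarrow> (case b of None \<Rightarrow> 0 | Some k \<Rightarrow> R $ k $ l))"

lemma Mrot_orth:
  fixes R :: "real^'d::finite^'d"
  assumes "orthogonal_matrix R"
  shows "Mrot R ** transpose (Mrot R) = mat 1" "transpose (Mrot R) ** Mrot R = mat 1"
proof -
  have R: "transpose R ** R = mat 1" using assms by (simp add: orthogonal_matrix_def)
  have "Mrot R ** transpose (Mrot R) = mat 1"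
  proof (unfold vec_eq_iff, intro allI)
    fix a b
    show "(Mrot R ** transpose (Mrot R)) $ a $ b = mat 1 $ a $ b"
    proof (cases a; cases b)
      fix l k assume "a = Some l" "b = Some k"
      then show ?thesis using R[unfolded vec_eq_iff, rule_format, of l k]
        by (simp add: matrix_matrix_mult_def sum_option Mrot_def transpose_def mat_def)
    qed (auto simp add: matrix_matrix_mult_def sum_option Mrot_def transpose_def mat_def)
  qed
  then show "Mrot R ** transpose (Mrot R) = mat 1" "transpose (Mrot R) ** Mrot R = mat 1"
    using matrix_left_right_inverse by auto
qed

lemma hfun_sym:
  fixes c :: "'q::finite \<Rightarrow> real^'d::finite"
  assumes R: "orthogonal_matrix R" and cs: "\<And>i. c (\<sigma> i) = R *v c i" and ws: "\<And>i. w (\<sigma> i) = w i"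
  shows "hfun c w cs (R *v u) $ \<sigma> j = hfun c w cs u $ j"
  by (simp add: hfun_def cs ws orth_inner[OF R] orth_norm[OF R])

lemma dh_sym:
  fixes c :: "'q::finite \<Rightarrow> real^'d::finite"
  assumes R: "orthogonal_matrix R" and cs: "\<And>i. c (\<sigma> i) = R *v c i" and ws: "\<And>i. w (\<sigma> i) = w i"
  shows "dh c w cs k (R *v u) $ \<sigma> j = (\<Sum>l\<in>UNIV. R $ k $ l * dh c w cs l u $ j)"
proof -
  have "dh c w cs k (R *v u) $ \<sigma> j = sqrt (w j) * ((\<Sum>l\<in>UNIV. R $ k $ l * c j $ l) / (2*cs^2)
     + (c j \<bullet> u) * (\<Sum>l\<in>UNIV. R $ k $ l * c j $ l) / (4*cs^4) - (\<Sum>l\<in>UNIV. R $ k $ l * u $ l) / (2*cs^2))"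
  proof -
    have e1: "(R *v c j) $ k = (\<Sum>l\<in>UNIV. R $ k $ l * c j $ l)" by (simp add: matrix_vector_mult_def)
    have e2: "(R *v u) $ k = (\<Sum>l\<in>UNIV. R $ k $ l * u $ l)" by (simp add: matrix_vector_mult_def)
    show ?thesis by (simp only: dh_def vec_lambda_beta cs ws orth_inner[OF R] e1 e2)
  qed
  also have "\<dots> = (\<Sum>l\<in>UNIV. R $ k $ l * dh c w cs l u $ j)"
    by (simp add: dh_def sum_divide_distrib sum_distrib_left sum_distrib_right
         flip: sum_subtractf sum.distrib) (simp add: algebra_simps)
  finally show ?thesis .
qed

lemma Jbar_rot:
  fixes c :: "'q::finite \<Rightarrow> real^'d::finite"
  assumes R: "orthogonal_matrix R" and sp: "\<sigma> permutes UNIV"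
    and cs: "\<And>i. c (\<sigma> i) = R *v c i" and ws: "\<And>i. w (\<sigma> i) = w i"
  shows "Jbar c w cs (R *v u) = perm_matrix \<sigma> ** Jbar c w cs u ** Mrot R"
proof -
  have "Jbar c w cs (R *v u) $ i $ b = (perm_matrix \<sigma> ** (Jbar c w cs u ** Mrot R)) $ i $ b" for i b
  proof -
    obtain j where ij: "i = \<sigma> j" and ji: "inv \<sigma> i = j"
      using permutes_inverses[OF sp] by metis
    show ?thesis
    proof (cases b)
      case None
      then show ?thesis unfolding perm_mult
        by (simp add: ij permutes_inverses(2)[OF sp] Jbar_None hfun_sym[where c=c and w=w and \<sigma>=\<sigma>, OF R cs ws] matrix_matrix_mult_def sum_option Mrot_def)
    next
      case (Some k)
      then show ?thesis unfolding perm_mult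
        by (simp add: ij permutes_inverses(2)[OF sp] Jbar_Some dh_sym[where c=c and w=w and \<sigma>=\<sigma>, OF R cs ws] matrix_matrix_mult_def sum_option Mrot_def mult.commute)
    qed
  qed
  then show ?thesis by (simp add: vec_eq_iff matrix_mul_assoc)
qed

lemma matrix_inv_eq:
  fixes A B :: "real^'n^'n"
  assumes "A ** B = mat 1" "B ** A = mat 1"
  shows "matrix_inv A = B"
proof -
  have ex: "\<exists>B'. A ** B' = mat 1 \<and> B' ** A = mat 1" using assms by blast
  have "A ** matrix_inv A = mat 1 \<and> matrix_inv A ** A = mat 1"
    unfolding matrix_inv_def by (rule someI_ex[OF ex])
  then have "matrix_inv A = (B ** A) ** matrix_inv A" by (simp add: assms)
  also have "\<dots> = B ** (A ** matrix_inv A)" by (simp add: matrix_mul_assoc)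
  also have "\<dots> = B" using \<open>A ** matrix_inv A = mat 1 \<and> _\<close> by simp
  finally show ?thesis .
qed

lemma gram_invertible:
  fixes J :: "real^'n::finite^'m::finite"
  assumes "full_col_rank J"
  shows "\<exists>B. B ** (transpose J ** J) = mat 1"
proof -
  have inj: "\<forall>x. J *v x = 0 \<longrightarrow> x = 0"
    using assms matrix_nonfull_linear_equations_eq[of J] unfolding full_col_rank_def by blast
  show ?thesis unfolding matrix_left_invertible_ker
  proof (intro allI impI)
    fix x assume "(transpose J ** J) *v x = 0"
    then have "inner (J *v x) (J *v x) = 0"
      by (simp add: inner_mv_transpose matrix_vector_mul_assoc)
    then show "x = 0" using inj by simp
  qed
qed


theorem mainTheorem1:
  fixes c :: "'q::finite \<Rightarrow> real^'d::finite"
    and w :: "'q \<Rightarrow> real" and cs :: real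
    and R :: "real^'d^'d" and \<sigma> :: "'q \<Rightarrow> 'q" and u :: "real^'d"
  assumes w_pos: "\<And>i. w i > 0"
    and cs_pos: "cs > 0"
    and iso: "isotropic_lattice c w cs"
    and R_orth: "orthogonal_matrix R"
    and \<sigma>_perm: "\<sigma> permutes UNIV"
    and c_sym: "\<And>i. c (\<sigma> i) = R *v c i"
    and w_sym: "\<And>i. w (\<sigma> i) = w i"
    and fcr: "full_col_rank (Jbar c w cs u)"
  shows "full_col_rank (Jbar c w cs (R *v u))
    \<and> denoise c w cs (R *v u) ** perm_matrix \<sigma> = perm_matrix \<sigma> ** denoise c w cs u"
proof -
  let ?P = "perm_matrix \<sigma>" and ?M = "Mrot R"
  let ?J = "Jbar c w cs u" and ?J' = "Jbar c w cs (R *v u)"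
  let ?A = "transpose ?J ** ?J"
  have J': "?J' = ?P ** ?J ** ?M" by (rule Jbar_rot[where c=c and w=w and \<sigma>=\<sigma>, OF R_orth \<sigma>_perm c_sym w_sym])
  have P1: "transpose ?P ** ?P = mat 1" and P2: "?P ** transpose ?P = mat 1"
    using perm_orth[OF \<sigma>_perm] by auto
  have M1: "?M ** transpose ?M = mat 1" and M2: "transpose ?M ** ?M = mat 1"
    using Mrot_orth[OF R_orth] by auto
  have P1': "transpose ?P ** (?P ** X) = X" for X :: "real^'n^'q"
    by (metis matrix_mul_assoc P1 matrix_mul_lid)
  have M1': "?M ** (transpose ?M ** X) = X" for X :: "real^'n^'d option"
    by (metis matrix_mul_assoc M1 matrix_mul_lid)
  have M2': "transpose ?M ** (?M ** X) = X" for X :: "real^'n^'d option"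
    by (metis matrix_mul_assoc M2 matrix_mul_lid)
  obtain B where B: "B ** ?A = mat 1" using gram_invertible[OF fcr] by blast
  have AB: "?A ** B = mat 1" using B matrix_left_right_inverse by auto
  have AB': "transpose ?J ** (?J ** (B ** X)) = X" for X :: "real^'n^'d option"
    by (metis matrix_mul_assoc AB matrix_mul_lid)
  have B': "B ** (transpose ?J ** (?J ** X)) = X" for X :: "real^'n^'d option"
    by (metis matrix_mul_assoc B matrix_mul_lid)
  have Ainv: "matrix_inv ?A = B" by (rule matrix_inv_eq[OF AB B])
  have A': "transpose ?J' ** ?J' = transpose ?M ** (?A ** ?M)"
    by (simp add: J' matrix_transpose_mul matrix_mul_assoc[symmetric] P1')
  have A'inv: "matrix_inv (transpose ?J' ** ?J') = transpose ?M ** (B ** ?M)"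
    unfolding A'
    by (rule matrix_inv_eq) (simp_all add: matrix_mul_assoc[symmetric] M1' M2' AB' B' M1 M2)
  have rank1: "rank ?J' \<le> rank ?J"
    unfolding J' using rank_mul_le_left rank_mul_le_right order_trans by metis
  have "?J = transpose ?P ** ?J' ** transpose ?M"
    by (simp add: J' matrix_mul_assoc[symmetric] P1' M1)
  then have rank2: "rank ?J \<le> rank ?J'"
    using rank_mul_le_left rank_mul_le_right order_trans by metis
  have fcr': "full_col_rank ?J'"
    using fcr rank1 rank2 unfolding full_col_rank_def by linarith
  have "denoise c w cs (R *v u) ** ?P = ?P ** (?J ** (B ** (transpose ?J ** (transpose ?P ** ?P))))"
    unfolding denoise_def Let_def A'inv
    by (simp add: J' matrix_transpose_mul matrix_mul_assoc[symmetric] M1' M2')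
  also have "\<dots> = ?P ** denoise c w cs u"
    by (simp add: P1 denoise_def Let_def Ainv matrix_mul_assoc[symmetric])
  finally show ?thesis using fcr' by simp
qed

end
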